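(* Let $r \geq 2$, let $H$ be a digraph (possibly with loops), and let $D$ be an $H$-colored $r$-quasi-transitive digraph such that every directed cycle of length $r+1$ in $D$ is an $H$-cycle. Let $u,v\in V(D)$. If $d_{D}(u,v) \geq r$ and $T$ is a shortest directed $uv$-path in $D$, then $T$ is an $H$-path.
   Context: All digraphs are finite. A digraph $D$ is $r$-quasi-transitive if for all distinct $u,v\in V(D)$, whenever there is a directed $uv$-path of length $r$, $u$ and $v$ are joined by an arc (in some direction). $d_D(u,v)$ is the length of a shortest directed $uv$-path (here it is assumed a $uv$-path exists). $D$ has no loops and comes with a map $\rho: A(D)\to V(H)$. For a walk $W=(x_0,\ldots,x_n)$ in $D$, there is an obstruction on $x_i$ if $(\rho(x_{i-1},x_i),\rho(x_i,x_{i+1})) \notin A(H)$; for an open walk this is considered at internal vertices $x_i$, $1\le i\le n-1$, for a closed walk at all $i\in\{0,\ldots,n-1\}$ with indices modulo $n$. An $H$-path is a directed path with no obstructions (the colours of consecutive arcs form a directed walk in $H$); an $H$-cycle is a directed cycle with no obstructions, taken cyclically. *)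

theory Defs
  imports Main
begin

text \<open>A finite digraph D is given by a vertex set V and an arc set A \<subseteq> V \<times> V.
  Walks/paths are vertex lists; the length of a walk xs is length xs - 1.\<close>

definition digraph :: "'v set \<Rightarrow> ('v \<times> 'v) set \<Rightarrow> bool" where
  "digraph V A \<longleftrightarrow> finite V \<and> A \<subseteq> V \<times> V"

definition loopless :: "('v \<times> 'v) set \<Rightarrow> bool" where
  "loopless A \<longleftrightarrow> (\<forall>x. (x, x) \<notin> A)"

definition dwalk :: "('v \<times> 'v) set \<Rightarrow> 'v list \<Rightarrow> bool" where
  "dwalk A xs \<longleftrightarrow> xs \<noteq> [] \<and> (\<forall>i. Suc i < length xs \<longrightarrow> (xs ! i, xs ! Suc i) \<in> A)"

definition dpath :: "('v \<times> 'v) set \<Rightarrow> 'v \<Rightarrow> 'v \<Rightarrow> 'v list \<Rightarrow> bool" where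
  "dpath A u v xs \<longleftrightarrow> dwalk A xs \<and> distinct xs \<and> hd xs = u \<and> last xs = v"

definition plen :: "'v list \<Rightarrow> nat" where
  "plen xs = length xs - 1"

text \<open>distance: length of a shortest directed u-v path (used when one exists)\<close>
definition ddist :: "('v \<times> 'v) set \<Rightarrow> 'v \<Rightarrow> 'v \<Rightarrow> nat" where
  "ddist A u v = (LEAST n. \<exists>xs. dpath A u v xs \<and> plen xs = n)"

definition shortest_dpath :: "('v \<times> 'v) set \<Rightarrow> 'v \<Rightarrow> 'v \<Rightarrow> 'v list \<Rightarrow> bool" where
  "shortest_dpath A u v xs \<longleftrightarrow> dpath A u v xs \<and> plen xs = ddist A u v"

definition r_quasi_transitive :: "nat \<Rightarrow> 'v set \<Rightarrow> ('v \<times> 'v) set \<Rightarrow> bool" where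
  "r_quasi_transitive r V A \<longleftrightarrow>
     (\<forall>u\<in>V. \<forall>v\<in>V. u \<noteq> v \<longrightarrow> (\<exists>xs. dpath A u v xs \<and> plen xs = r)
        \<longrightarrow> (u, v) \<in> A \<or> (v, u) \<in> A)"

definition H_colored :: "('v \<times> 'v) set \<Rightarrow> 'c set \<Rightarrow> ('c \<times> 'c) set \<Rightarrow> ('v \<times> 'v \<Rightarrow> 'c) \<Rightarrow> bool" where
  "H_colored A VH AH \<rho> \<longleftrightarrow> AH \<subseteq> VH \<times> VH \<and> (\<forall>a\<in>A. \<rho> a \<in> VH)"

definition dcycle :: "('v \<times> 'v) set \<Rightarrow> 'v list \<Rightarrow> bool" where
  "dcycle A xs \<longleftrightarrow> length xs \<ge> 2 \<and> distinct xs \<and>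
     (\<forall>i < length xs. (xs ! i, xs ! ((i + 1) mod length xs)) \<in> A)"

text \<open>no obstruction at any internal vertex of an open walk\<close>
definition no_obstr_open :: "('c \<times> 'c) set \<Rightarrow> ('v \<times> 'v \<Rightarrow> 'c) \<Rightarrow> 'v list \<Rightarrow> bool" where
  "no_obstr_open AH \<rho> xs \<longleftrightarrow>
     (\<forall>i. 1 \<le> i \<and> Suc i < length xs \<longrightarrow>
        (\<rho> (xs ! (i - 1), xs ! i), \<rho> (xs ! i, xs ! Suc i)) \<in> AH)"

definition no_obstr_closed :: "('c \<times> 'c) set \<Rightarrow> ('v \<times> 'v \<Rightarrow> 'c) \<Rightarrow> 'v list \<Rightarrow> bool" where
  "no_obstr_closed AH \<rho> xs \<longleftrightarrow>
     (let k = length xs in \<forall>i < k.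
        (\<rho> (xs ! ((i + k - 1) mod k), xs ! i), \<rho> (xs ! i, xs ! ((i + 1) mod k))) \<in> AH)"

definition H_path :: "('v \<times> 'v) set \<Rightarrow> ('c \<times> 'c) set \<Rightarrow> ('v \<times> 'v \<Rightarrow> 'c) \<Rightarrow> 'v \<Rightarrow> 'v \<Rightarrow> 'v list \<Rightarrow> bool" where
  "H_path A AH \<rho> u v xs \<longleftrightarrow> dpath A u v xs \<and> no_obstr_open AH \<rho> xs"

definition H_cycle :: "('v \<times> 'v) set \<Rightarrow> ('c \<times> 'c) set \<Rightarrow> ('v \<times> 'v \<Rightarrow> 'c) \<Rightarrow> 'v list \<Rightarrow> bool" where
  "H_cycle A AH \<rho> xs \<longleftrightarrow> dcycle A xs \<and> no_obstr_closed AH \<rho> xs"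

end

theory Submission
  imports Defs
begin

lemma dwalk_take: "dwalk A xs \<Longrightarrow> k > 0 \<Longrightarrow> dwalk A (take k xs)"
  unfolding dwalk_def by (auto simp: min_def)

lemma dwalk_drop: "dwalk A xs \<Longrightarrow> k < length xs \<Longrightarrow> dwalk A (drop k xs)"
  unfolding dwalk_def by auto

lemma dwalk_append:
  assumes "dwalk A xs" "dwalk A ys" "(last xs, hd ys) \<in> A"
  shows "dwalk A (xs @ ys)"
  unfolding dwalk_def
proof (intro conjI allI impI)
  show "xs @ ys \<noteq> []" using assms(1) by (simp add: dwalk_def)
  fix i assume i: "Suc i < length (xs @ ys)"
  show "((xs @ ys) ! i, (xs @ ys) ! Suc i) \<in> A"
  proof (cases "Suc i < length xs")
    case True thus ?thesis using assms(1) by (simp add: dwalk_def nth_append)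
  next
    case False
    show ?thesis
    proof (cases "Suc i = length xs")
      case True
      have "xs ! i = last xs" using True assms(1)
        by (metis diff_Suc_1 dwalk_def last_conv_nth)
      moreover have "ys ! 0 = hd ys" using assms(2) by (simp add: dwalk_def hd_conv_nth)
      ultimately show ?thesis using True assms(3) by (simp add: nth_append)
    next
      case False2: False
      hence "i \<ge> length xs" using False by simp
      then obtain m where m: "i = length xs + m" using le_Suc_ex by blast
      have "Suc m < length ys" using i m by simp
      thus ?thesis using assms(2) m by (simp add: dwalk_def nth_append)
    qed
  qed
qed

theorem theorem21:
  fixes V :: "'v set" and A :: "('v \<times> 'v) set"
    and VH :: "'c set" and AH :: "('c \<times> 'c) set" and \<rho> :: "'v \<times> 'v \<Rightarrow> 'c"
    and r :: nat and u v :: 'v and T :: "'v list"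
  assumes "r \<ge> 2"
    and "digraph V A" and "loopless A"
    and "finite VH" and "H_colored A VH AH \<rho>"
    and "r_quasi_transitive r V A"
    and "\<forall>C. dcycle A C \<and> length C = r + 1 \<longrightarrow> H_cycle A AH \<rho> C"
    and "u \<in> V" and "v \<in> V"
    and "shortest_dpath A u v T"
    and "ddist A u v \<ge> r"
  shows "H_path A AH \<rho> u v T"
proof -
  have dp: "dpath A u v T" and pl: "plen T = ddist A u v"
    using assms(10) by (auto simp: shortest_dpath_def)
  have wT: "dwalk A T" and dT: "distinct T" and hT: "hd T = u" and lT: "last T = v"
    using dp by (auto simp: dpath_def)
  define n where "n = length T - 1"
  have Tne: "T \<noteq> []" using wT by (simp add: dwalk_def)
  have len: "length T = n + 1" using Tne n_def by (cases T) auto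
  have nr: "n \<ge> r" using pl assms(11) n_def by (simp add: plen_def)
  have AV: "A \<subseteq> V \<times> V" using assms(2) by (simp add: digraph_def)
  have arcT: "\<And>k. k < n \<Longrightarrow> (T ! k, T ! Suc k) \<in> A" using wT len by (simp add: dwalk_def)
  have key: "\<And>j. j + r \<le> n \<Longrightarrow> (T ! (j + r), T ! j) \<in> A"
  proof -
    fix j assume jr: "j + r \<le> n"
    define S where "S = take (r + 1) (drop j T)"
    have lenS: "length S = r + 1" using jr len S_def by simp
    have Snth: "\<And>k. k \<le> r \<Longrightarrow> S ! k = T ! (j + k)" using jr len S_def by simp
    have dS: "dpath A (T ! j) (T ! (j + r)) S"
      unfolding dpath_def
    proof (intro conjI)
      show "dwalk A S" unfolding S_def
        by (rule dwalk_take[OF dwalk_drop[OF wT]]) (use jr len in auto)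
      show "distinct S" unfolding S_def using dT by simp
      show "hd S = T ! j" using Snth[of 0] lenS by (cases S) auto
      show "last S = T ! (j + r)" using Snth[of r] lenS
        by (metis add_diff_cancel_right' last_conv_nth le_refl list.size(3) zero_neq_one add_is_0)
    qed
    have ne: "T ! j \<noteq> T ! (j + r)" using dT len jr assms(1)
      by (simp add: nth_eq_iff_index_eq)
    have inV: "T ! j \<in> V" "T ! (j + r) \<in> V"
    proof -
      have "(T ! j, T ! Suc j) \<in> A" using arcT jr assms(1) by simp
      thus "T ! j \<in> V" using AV by auto
      define m where "m = j + r - 1"
      have m: "j + r = Suc m" using assms(1) m_def by simp
      have "(T ! m, T ! Suc m) \<in> A" using arcT jr m by simp
      with m show "T ! (j + r) \<in> V" using AV by auto
    qed
    have adj: "(T ! j, T ! (j + r)) \<in> A \<or> (T ! (j + r), T ! j) \<in> A"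
      using assms(6) inV ne dS lenS unfolding r_quasi_transitive_def
      by (metis plen_def add_diff_cancel_right')
    show "(T ! (j + r), T ! j) \<in> A"
    proof (rule ccontr)
      assume "(T ! (j + r), T ! j) \<notin> A"
      hence a: "(T ! j, T ! (j + r)) \<in> A" using adj by simp
      define P where "P = take (j + 1) T @ drop (j + r) T"
      have w1: "dwalk A (take (j + 1) T)" by (rule dwalk_take[OF wT]) simp
      have w2: "dwalk A (drop (j + r) T)" by (rule dwalk_drop[OF wT]) (use jr len in simp)
      have l1: "last (take (j + 1) T) = T ! j" using jr len
        by (simp add: take_Suc_conv_app_nth)
      have h2: "hd (drop (j + r) T) = T ! (j + r)" using jr len by (simp add: hd_drop_conv_nth)
      have wP: "dwalk A P" unfolding P_def using dwalk_append[OF w1 w2] l1 h2 a by simp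
      have dPd: "distinct P" unfolding P_def using dT assms(1)
        by (simp add: set_take_disj_set_drop_if_distinct)
      have hP: "hd P = u" unfolding P_def using hT Tne by (simp add: hd_append)
      have lP: "last P = v" unfolding P_def using lT jr len by (simp add: last_drop)
      have "dpath A u v P" using wP dPd hP lP by (simp add: dpath_def)
      hence "ddist A u v \<le> plen P" unfolding ddist_def by (auto intro: Least_le)
      moreover have "plen P = n + 1 - r" unfolding P_def plen_def using jr len by simp
      ultimately show False using pl n_def assms(1) nr by (simp add: plen_def)
    qed
  qed
  have "no_obstr_open AH \<rho> T"
    unfolding no_obstr_open_def
  proof (intro allI impI)
    fix i assume i: "1 \<le> i \<and> Suc i < length T"
    define j where "j = min (i - 1) (n - r)"
    have jr: "j + r \<le> n" using j_def nr by simp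
    have ji: "j < i" "i < j + r" using i j_def nr assms(1) len by auto
    define C where "C = take (r + 1) (drop j T)"
    have lenC: "length C = r + 1" using jr len C_def by simp
    have Cnth: "\<And>k. k \<le> r \<Longrightarrow> C ! k = T ! (j + k)" using jr len C_def by simp
    have dc: "dcycle A C" unfolding dcycle_def
    proof (intro conjI allI impI)
      show "2 \<le> length C" using lenC assms(1) by simp
      show "distinct C" using dT C_def by simp
      fix k assume k: "k < length C"
      show "(C ! k, C ! ((k + 1) mod length C)) \<in> A"
      proof (cases "k = r")
        case True
        thus ?thesis using lenC Cnth[of r] Cnth[of 0] key[OF jr] by simp
      next
        case False
        hence "k < r" using k lenC by simp
        thus ?thesis using lenC Cnth[of k] Cnth[of "Suc k"] arcT[of "j + k"] jr by simp
      qed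
    qed
    hence "no_obstr_closed AH \<rho> C" using assms(7) lenC by (simp add: H_cycle_def)
    define k where "k = i - j"
    have k: "1 \<le> k" "k < r" using ji k_def by auto
    have "(\<rho> (C ! ((k + r) mod Suc r), C ! k), \<rho> (C ! k, C ! (Suc k mod Suc r))) \<in> AH"
    proof -
      have F: "\<forall>i<Suc r. (\<rho> (C ! ((i + r) mod Suc r), C ! i), \<rho> (C ! i, C ! (Suc i mod Suc r))) \<in> AH"
        using \<open>no_obstr_closed AH \<rho> C\<close> unfolding no_obstr_closed_def Let_def lenC by simp
      show ?thesis by (rule F[rule_format]) (use k in simp)
    qed
    moreover have "(k + r) mod Suc r = k - 1"
    proof -
      have e: "k + r = (k - 1) + Suc r" using k by simp
      have "(k + r) mod Suc r = (k - 1) mod Suc r" by (simp only: e mod_add_self2)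
      thus ?thesis using k by simp
    qed
    moreover have "Suc k mod Suc r = Suc k" using k by simp
    ultimately have "(\<rho> (C ! (i - j - 1), C ! (i - j)), \<rho> (C ! (i - j), C ! (i - j + 1))) \<in> AH"
      using k_def by simp
    moreover have "C ! (i - j - 1) = T ! (i - 1)" using Cnth[of "i - j - 1"] ji by simp
    moreover have "C ! (i - j) = T ! i" using Cnth[of "i - j"] ji by simp
    moreover have "C ! (i - j + 1) = T ! Suc i" using Cnth[of "i - j + 1"] ji by simp
    ultimately show "(\<rho> (T ! (i - 1), T ! i), \<rho> (T ! i, T ! Suc i)) \<in> AH" by simp
  qed
  thus ?thesis using dp by (simp add: H_path_def)
qed

end
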